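(* Let $n\ge2$, $\delta>0$, $R>0$, and let $\mathbf{a}\in\mathbb{R}^n$ be a fixed nonzero vector with $-2\le\mathbf{a}_i\le2$ for all $i$ and $\mathbf{a}^\top\mathbf{1}=0$. Let $\mathbf{y}$ be uniformly distributed on the sphere $\{\mathbf{y}\in\mathbb{R}^n:\|\mathbf{y}\|_2=R\}$, and let $\tilde{\mathbf{y}}$ be obtained by rounding each entry of $\mathbf{y}$ to precision $\delta$, so that $|\tilde{\mathbf{y}}_i-\mathbf{y}_i|\le\delta$ for all $i$. Then $$\Pr\big(\mathbf{a}^\top\tilde{\mathbf{y}}=0\big)\le\frac{2\delta n^2}{\|\mathbf{a}\|_2R}.$$
   Context: $\mathbf{1}$ denotes the all-ones vector in $\mathbb{R}^n$. *)

theory Defs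
  imports "HOL-Analysis.Analysis"
begin

text \<open>Uniform (normalized surface) probability measure on the sphere of radius R
  in real^'n, defined as the cone measure: push forward the uniform distribution
  on the unit ball along x \<mapsto> R x / |x|.\<close>
definition unif_sphere :: "real \<Rightarrow> (real^'n::finite) measure" where
  "unif_sphere R = distr (uniform_measure lborel (ball 0 1)) borel (\<lambda>x. R *\<^sub>R (x /\<^sub>R norm x))"

definition round_vec :: "(real \<Rightarrow> real) \<Rightarrow> real^'n::finite \<Rightarrow> real^'n" where
  "round_vec r y = (\<chi> i. r (y $ i))"

end

theory Submission
  imports Defs
begin


typedef 'a wo = "UNIV :: 'a set" by auto

instantiation wo :: (finite) wellorder
begin
definition less_eq_wo :: "'a wo \<Rightarrow> 'a wo \<Rightarrow> bool" where
  "less_eq_wo x y \<longleftrightarrow> to_nat (Rep_wo x) \<le> to_nat (Rep_wo y)"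
definition less_wo :: "'a wo \<Rightarrow> 'a wo \<Rightarrow> bool" where
  "less_wo x y \<longleftrightarrow> to_nat (Rep_wo x) < to_nat (Rep_wo y)"
instance
proof
  fix x y z :: "'a wo"
  show "(x < y) = (x \<le> y \<and> \<not> y \<le> x)" by (auto simp: less_eq_wo_def less_wo_def)
  show "x \<le> x" by (simp add: less_eq_wo_def)
  show "x \<le> y \<Longrightarrow> y \<le> z \<Longrightarrow> x \<le> z" by (simp add: less_eq_wo_def)
  show "x \<le> y \<Longrightarrow> y \<le> x \<Longrightarrow> x = y"
    by (simp add: less_eq_wo_def Rep_wo_inject[symmetric])
  show "x \<le> y \<or> y \<le> x" by (auto simp: less_eq_wo_def)
next
  fix P :: "'a wo \<Rightarrow> bool" and a
  assume H: "\<And>x. (\<And>y. y < x \<Longrightarrow> P y) \<Longrightarrow> P x"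
  show "P a"
    by (induction a rule: measure_induct_rule[of "\<lambda>x. to_nat (Rep_wo x)"]) (rule H, simp add: less_wo_def)
qed
end

instance wo :: (finite) finite
proof
  have "(UNIV :: 'a wo set) = Abs_wo ` UNIV"
    by (metis Rep_wo_inverse UNIV_I image_eqI subsetI subset_antisym)
  then show "finite (UNIV :: 'a wo set)" by (metis finite finite_imageI)
qed

lemma prod_Basis_cart: "(\<Prod>b\<in>Basis. (x::real^'n) \<bullet> b) = (\<Prod>i\<in>UNIV. x $ i)"
  by (simp add: Basis_vec_def cart_eq_inner_axis axis_eq_axis prod.UNION_disjoint)

definition relab :: "real^('n::finite wo) \<Rightarrow> real^'n" where
  "relab y = (\<chi> i. y $ Abs_wo i)"
definition unrelab :: "real^'n::finite \<Rightarrow> real^('n wo)" where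
  "unrelab x = (\<chi> j. x $ Rep_wo j)"

lemma relab_unrelab[simp]: "relab (unrelab x) = x" "unrelab (relab y) = y"
  by (simp_all add: relab_def unrelab_def Abs_wo_inverse Rep_wo_inverse vec_eq_iff)

lemma prod_reindex_wo: "(\<Prod>j\<in>UNIV. f (Rep_wo j)) = (\<Prod>i\<in>(UNIV::'a::finite set). f i)"
proof -
  have "bij_betw Rep_wo (UNIV :: 'a wo set) UNIV"
    by (rule bij_betwI[where g=Abs_wo]) (auto simp: Abs_wo_inverse Rep_wo_inverse)
  then show ?thesis by (rule prod.reindex_bij_betw)
qed

lemma sum_reindex_wo: "(\<Sum>j\<in>UNIV. f (Rep_wo j)) = (\<Sum>i\<in>(UNIV::'a::finite set). f i)"
proof -
  have "bij_betw Rep_wo (UNIV :: 'a wo set) UNIV"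
    by (rule bij_betwI[where g=Abs_wo]) (auto simp: Abs_wo_inverse Rep_wo_inverse)
  then show ?thesis by (rule sum.reindex_bij_betw)
qed

lemma inner_relab: "x \<bullet> relab y = unrelab x \<bullet> y"
  unfolding inner_vec_def relab_def unrelab_def
  by (simp add: sum_reindex_wo[where f="\<lambda>i. x $ i * y $ Abs_wo i", symmetric] Rep_wo_inverse)

lemma norm_relab: "norm (relab y) = norm y"
  using inner_relab[of "relab y" y] by (simp add: norm_eq_sqrt_inner)

lemma relab_borel[measurable]: "relab \<in> borel_measurable borel"
  unfolding relab_def by (intro borel_measurable_continuous_onI continuous_intros)

lemma lborel_relab: "(lborel :: (real^'n::finite) measure) = distr lborel borel relab"
proof (rule lborel_eqI)
  fix l u :: "real^'n"
  assume le: "\<And>b. b \<in> Basis \<Longrightarrow> l \<bullet> b \<le> u \<bullet> b"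
  have le': "l $ i \<le> u $ i" for i
  proof -
    have "axis i (1::real) \<in> Basis" by (auto simp: Basis_vec_def)
    then show ?thesis using le[of "axis i 1"] by (simp add: cart_eq_inner_axis)
  qed
  have pre: "relab -` box l u = box (unrelab l) (unrelab u)"
    by (auto simp: mem_box_cart relab_def unrelab_def Abs_wo_inverse)
       (metis Abs_wo_inverse Rep_wo_inverse UNIV_I)+
  have "emeasure (distr lborel borel relab) (box l u) = emeasure lborel (box (unrelab l) (unrelab u))"
    by (simp add: emeasure_distr pre)
  also have "\<dots> = (\<Prod>b\<in>Basis. (unrelab u - unrelab l) \<bullet> b)"
  proof -
    have "\<forall>b\<in>Basis. unrelab l \<bullet> b \<le> unrelab u \<bullet> b"
      using le' by (auto simp: Basis_vec_def inner_axis unrelab_def)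
    then show ?thesis by (simp add: emeasure_lborel_box_eq)
  qed
  also have "\<dots> = (\<Prod>b\<in>Basis. (u - l) \<bullet> b)"
    by (simp add: prod_Basis_cart unrelab_def prod_reindex_wo[where f="\<lambda>i. u $ i - l $ i"])
  finally show "emeasure (distr lborel borel relab) (box l u) = (\<Prod>b\<in>Basis. (u - l) \<bullet> b)" .
qed simp



lemma pow_ineq_nat: "(q+1::nat)^q \<le> (q+1) * q^q"
proof -
  have "(q+1::nat)^q = (\<Sum>k\<le>q. (q choose k) * q^k * 1^(q-k))"
    using binomial_ring[of q 1 q] by simp
  also have "\<dots> = (\<Sum>k\<le>q. (q choose k) * q^k)" by simp
  also have "\<dots> \<le> (\<Sum>k\<le>q. q^q)"
  proof (rule sum_mono)
    fix k assume k: "k \<in> {..q}"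
    then have kq: "k \<le> q" by simp
    have "(q choose k) = (q choose (q-k))" using kq by (rule binomial_symmetric)
    also have "\<dots> \<le> q^(q-k)" by (rule binomial_le_pow) simp
    finally have "(q choose k) * q^k \<le> q^(q-k) * q^k" by (rule mult_right_mono) simp
    also have "q^(q-k) * q^k = q^(q-k+k)" by (rule power_add[symmetric])
    also have "q-k+k = q" using kq by simp
    finally show "(q choose k) * q^k \<le> q^q" .
  qed
  also have "\<dots> = (q+1) * q^q" by simp
  finally show ?thesis .
qed

lemma pow_ineq_real:
  fixes m :: nat assumes "m \<ge> 2"
  shows "(1 - 1/real m)^(m-1) * real m \<ge> 1"
proof -
  define q where "q = m - 1"
  have q: "m = q+1" "q \<ge> 1" using assms by (simp_all add: q_def)
  have "real ((q+1)^q) \<le> real ((q+1) * q^q)" using pow_ineq_nat[of q] by (simp only: of_nat_le_iff)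
  then have h0: "(1 + real q)^q \<le> real q ^ q + real q * real q ^ q" by simp
  have e1: "(real q + 1) * real q ^ q = real q ^ q + real q * real q ^ q" by (simp add: ring_distribs)
  have h: "(real q + 1)^q \<le> (real q + 1) * real q ^ q" using h0 e1 by (simp add: add.commute)
  have qq: "1 - 1/real m = real q / (real q + 1)" using q by (simp add: field_simps)
  have "(1 - 1/real m)^(m-1) * real m = real q ^ q / (real q + 1)^q * (real q + 1)"
    unfolding qq using q by (simp add: power_divide)
  also have "\<dots> \<ge> 1"
  proof -
    have pos: "(real q + 1)^q > 0" by simp
    have "(real q + 1)^q \<le> real q ^ q * (real q + 1)" using h by (simp add: mult.commute)
    then show ?thesis using pos by (simp add: le_divide_eq)
  qed
  finally show ?thesis .
qed



lemma norm_sq_cart: "norm (x::real^'n::finite) ^ 2 = (\<Sum>j\<in>UNIV. (x $ j)^2)"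
  by (simp only: power2_norm_eq_inner) (simp add: inner_vec_def power2_eq_square)

lemma key_wo:
  fixes e :: "real^('d::{finite,wellorder})" and h :: real
  assumes e: "norm e = 1" and h: "h > 0" and m2: "CARD('d) \<ge> 2"
  shows "measure lebesgue (ball 0 1 \<inter> {x. \<bar>e \<bullet> x\<bar> \<le> h})
           \<le> h * real CARD('d) * measure lebesgue (ball (0::real^'d::{finite,wellorder}) 1)"
proof -
  define m where "m = CARD('d)"
  have m2': "real m \<ge> 2" using m2 by (simp add: m_def)
  obtain k :: 'd where True by simp
  obtain Q :: "real^'d::{finite,wellorder} \<Rightarrow> real^'d::{finite,wellorder}" where Q: "orthogonal_transformation Q" and Qe: "Q e = axis k 1"
    using orthogonal_transformation_exists_1[of e "axis k 1"] e by auto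
  have linQ: "linear Q" using Q orthogonal_transformation_linear by blast
  have Qk: "Q x $ k = e \<bullet> x" for x
  proof -
    have "Q x $ k = Q x \<bullet> axis k 1" by (simp add: inner_axis)
    also have "\<dots> = Q x \<bullet> Q e" by (simp add: Qe)
    also have "\<dots> = x \<bullet> e" using Q by (simp add: orthogonal_transformation_def)
    finally show ?thesis by (simp add: inner_commute)
  qed
  define \<alpha> where "\<alpha> = 1 / (h * sqrt m)"
  define \<beta> where "\<beta> = sqrt (1 - 1/m)"
  define d where "d j = (if j = k then \<alpha> else \<beta>)" for j
  define D where "D x = (\<chi> j. d j * x $ j)" for x :: "real^'d::{finite,wellorder}"
  have linD: "linear D"
    unfolding linear_iff D_def by (auto simp: vec_eq_iff algebra_simps)
  define L where "L = D \<circ> Q"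
  have linL: "linear L" unfolding L_def using linD linQ by (rule linear_compose[rotated])
  define A where "A = ball (0::real^'d::{finite,wellorder}) 1 \<inter> {x. \<bar>e \<bullet> x\<bar> \<le> h}"
  have Aborel: "A \<in> sets borel" unfolding A_def by measurable
  have Alm: "A \<in> lmeasurable"
    by (rule fmeasurableI2[where A="ball 0 1"]) (auto simp: A_def Aborel)
  have bpos: "\<beta> > 0" using m2' by (simp add: \<beta>_def)
  have b2: "\<beta>^2 = 1 - 1/m" using m2' by (simp add: \<beta>_def)
  have a2: "\<alpha>^2 * h^2 = 1/m" using h m2' by (simp add: \<alpha>_def power_divide power_mult_distrib)
  have sub: "L ` A \<subseteq> ball 0 1"
  proof
    fix z assume "z \<in> L ` A"
    then obtain x where x: "x \<in> A" and z: "z = D (Q x)" by (auto simp: L_def)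
    define y where "y = Q x"
    have ny: "norm y < 1" using x Q by (simp add: A_def y_def orthogonal_transformation_norm)
    have yk: "\<bar>y $ k\<bar> \<le> h" using x by (simp add: A_def y_def Qk)
    have "norm z ^ 2 = (\<Sum>j\<in>UNIV. (d j * y $ j)^2)"
      by (simp add: z D_def y_def norm_sq_cart)
    also have "\<dots> = (\<alpha>^2 - \<beta>^2) * (y $ k)^2 + \<beta>^2 * (\<Sum>j\<in>UNIV. (y $ j)^2)"
    proof -
      have "(\<Sum>j\<in>UNIV. (d j * y $ j)^2) = (\<Sum>j\<in>UNIV. \<beta>^2 * (y $ j)^2 + (if j = k then (\<alpha>^2 - \<beta>^2) * (y $ k)^2 else 0))"
        by (rule sum.cong) (auto simp: d_def power_mult_distrib algebra_simps)
      then show ?thesis by (simp add: sum.distrib sum_distrib_left)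
    qed
    also have "(\<Sum>j\<in>UNIV. (y $ j)^2) = norm y ^ 2"
      by (simp add: norm_sq_cart)
    also have "(\<alpha>^2 - \<beta>^2) * (y $ k)^2 + \<beta>^2 * norm y ^ 2 = \<alpha>^2 * (y $ k)^2 + \<beta>^2 * (norm y ^ 2 - (y $ k)^2)"
      by (simp add: algebra_simps)
    also have "\<dots> < 1"
    proof -
      have "(y $ k)^2 \<le> h^2" using yk h by (metis abs_le_square_iff abs_of_pos)
      then have "\<alpha>^2 * (y $ k)^2 \<le> \<alpha>^2 * h^2" by (simp add: mult_left_mono)
      moreover have "\<beta>^2 * (norm y ^ 2 - (y $ k)^2) \<le> \<beta>^2 * norm y ^ 2" by (simp add: mult_left_mono)
      moreover have "norm y ^ 2 < 1" using ny by (simp add: power_less_one_iff)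
      then have "\<beta>^2 * norm y ^ 2 < \<beta>^2" using bpos by simp
      ultimately show ?thesis using a2 b2 by linarith
    qed
    finally have "norm z ^ 2 < 1" .
    then show "z \<in> ball 0 1" by (simp add: power_less_one_iff)
  qed
  have detD: "det (matrix D) = \<alpha> * \<beta>^(m-1)"
  proof -
    have "det (matrix D) = (\<Prod>j\<in>UNIV. matrix D $ j $ j)"
      by (rule det_diagonal) (simp add: matrix_def D_def axis_def)
    also have "\<dots> = (\<Prod>j\<in>UNIV. d j)" by (simp add: matrix_def D_def axis_def)
    also have "\<dots> = d k * (\<Prod>j\<in>UNIV-{k}. d j)" by (simp add: prod.remove)
    also have "(\<Prod>j\<in>UNIV-{k}. d j) = (\<Prod>j\<in>UNIV-{k}. \<beta>)" by (rule prod.cong) (auto simp: d_def)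
    also have "\<dots> = \<beta>^(m-1)" by (simp add: m_def card_Diff_singleton)
    finally show ?thesis by (simp add: d_def)
  qed
  have detQ: "\<bar>det (matrix Q)\<bar> = 1"
    using Q det_orthogonal_matrix orthogonal_transformation_matrix by fastforce
  have detL: "\<bar>det (matrix L)\<bar> = \<alpha> * \<beta>^(m-1)"
  proof -
    have "matrix L = matrix D ** matrix Q" unfolding L_def using linD linQ by (simp add: matrix_compose)
    then show ?thesis using detD detQ bpos h by (simp add: det_mul abs_mult \<alpha>_def)
  qed
  have cge: "\<alpha> * \<beta>^(m-1) \<ge> 1 / (h * m)"
  proof -
    have pw: "(1 - 1/real m)^(m-1) * real m \<ge> 1" using pow_ineq_real m2 by (simp add: m_def)
    have "\<beta>^(m-1) = sqrt ((1 - 1/real m)^(m-1))" by (simp add: \<beta>_def real_sqrt_power)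
    also have "\<dots> \<ge> sqrt (1 / real m)"
    proof (rule real_sqrt_le_mono)
      show "1 / real m \<le> (1 - 1/real m)^(m-1)" using pw m2' by (simp add: divide_le_eq mult.commute)
    qed
    finally have b: "\<beta>^(m-1) \<ge> sqrt (1 / real m)" .
    have "\<alpha> * \<beta>^(m-1) \<ge> \<alpha> * sqrt (1/real m)"
      using h b m2' by (intro mult_left_mono) (auto simp: \<alpha>_def)
    moreover have "\<alpha> * sqrt (1/real m) = 1/(h*m)"
    proof -
      have "sqrt (real m) * sqrt (real m) = real m" using m2' by simp
      then show ?thesis using h m2' by (simp add: \<alpha>_def real_sqrt_divide field_simps)
    qed
    ultimately show ?thesis by linarith
  qed
  have eqL: "measure lebesgue (L ` A) = \<alpha> * \<beta>^(m-1) * measure lebesgue A"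
    using measure_linear_image[OF linL Alm] detL by simp
  have leL: "measure lebesgue (L ` A) \<le> measure lebesgue (ball (0::real^'d::{finite,wellorder}) 1)"
  proof (rule measure_mono_fmeasurable)
    show "L ` A \<in> sets lebesgue" using measurable_linear_image[OF linL Alm] by (simp add: fmeasurable_def)
  qed (use sub in auto)
  have "\<alpha> * \<beta>^(m-1) * measure lebesgue A \<le> measure lebesgue (ball (0::real^'d::{finite,wellorder}) 1)" using eqL leL by simp
  moreover have "measure lebesgue A \<ge> 0" by simp
  ultimately have "1/(h*m) * measure lebesgue A \<le> measure lebesgue (ball (0::real^'d::{finite,wellorder}) 1)"
    using cge by (meson mult_right_mono order.trans)
  then show ?thesis using h m2' by (simp add: A_def m_def field_simps)
qed



lemma card_wo: "CARD('n::finite wo) = CARD('n)"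
proof -
  have "bij_betw Rep_wo (UNIV :: 'n wo set) UNIV"
    by (rule bij_betwI[where g=Abs_wo]) (auto simp: Abs_wo_inverse Rep_wo_inverse)
  then show ?thesis by (rule bij_betw_same_card)
qed

lemma slab_lborel:
  fixes a :: "real^'n::finite" and s :: real
  assumes a: "a \<noteq> 0" and s: "s > 0" and n2: "CARD('n) \<ge> 2"
  shows "measure lborel (ball 0 1 \<inter> {x. \<bar>a \<bullet> x\<bar> \<le> s})
           \<le> s / norm a * real CARD('n) * measure lborel (ball (0::real^'n) 1)"
proof -
  define a' where "a' = unrelab a"
  have na': "norm a' = norm a" using norm_relab[of "unrelab a"] by (simp add: a'_def)
  have napos: "norm a > 0" using a by simp
  define e where "e = a' /\<^sub>R norm a"
  define h where "h = s / norm a"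
  have ne: "norm e = 1" using napos by (simp add: e_def na')
  have hpos: "h > 0" using s napos by (simp add: h_def)
  have meas: "\<And>S. S \<in> sets borel \<Longrightarrow> measure lborel S = measure lborel (relab -` S :: (real^'n wo) set)"
  proof -
    fix S :: "(real^'n) set" assume S: "S \<in> sets borel"
    have "measure lborel S = measure (distr lborel borel relab) S"
      by (subst lborel_relab) simp
    also have "\<dots> = measure lborel (relab -` S :: (real^'n wo) set)"
      using S by (simp add: measure_distr)
    finally show "measure lborel S = measure lborel (relab -` S :: (real^'n wo) set)" .
  qed
  have pre: "relab -` (ball 0 1 \<inter> {x. \<bar>a \<bullet> x\<bar> \<le> s}) = ball 0 1 \<inter> {y. \<bar>e \<bullet> y\<bar> \<le> h}"
  proof -
    have "\<bar>a \<bullet> relab y\<bar> \<le> s \<longleftrightarrow> \<bar>e \<bullet> y\<bar> \<le> h" for y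
    proof -
      have "e \<bullet> y = (a \<bullet> relab y) / norm a" by (simp add: e_def a'_def inner_relab divide_inverse mult.commute)
      then show ?thesis using napos by (simp add: h_def abs_divide divide_le_cancel)
    qed
    then show ?thesis by (auto simp: norm_relab)
  qed
  have preb: "relab -` (ball 0 1) = (ball 0 1 :: (real^'n wo) set)"
    by (auto simp: norm_relab)
  have "measure lborel (ball 0 1 \<inter> {x. \<bar>a \<bullet> x\<bar> \<le> s})
        = measure lborel (relab -` (ball 0 1 \<inter> {x. \<bar>a \<bullet> x\<bar> \<le> s}) :: (real^'n wo) set)"
    by (rule meas) measurable
  also have "\<dots> = measure lebesgue (ball 0 1 \<inter> {y. \<bar>e \<bullet> y\<bar> \<le> h} :: (real^'n wo) set)"
  proof -
    have "(ball 0 1 \<inter> {y. \<bar>e \<bullet> y\<bar> \<le> h} :: (real^'n wo) set) \<in> sets lborel" by measurable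
    then show ?thesis by (simp only: pre measure_completion)
  qed
  also have "\<dots> \<le> h * real CARD('n wo) * measure lebesgue (ball (0::real^'n wo) 1)"
    using key_wo[OF ne hpos] n2 by (simp add: card_wo)
  also have "measure lebesgue (ball (0::real^'n wo) 1) = measure lborel (ball (0::real^'n) 1)"
  proof -
    have "measure lborel (ball (0::real^'n) 1) = measure lborel (relab -` (ball 0 1) :: (real^'n wo) set)"
      by (rule meas) measurable
    moreover have "(ball 0 1 :: (real^'n wo) set) \<in> sets lborel" by measurable
    ultimately show ?thesis by (simp only: preb measure_completion)
  qed
  finally show ?thesis by (simp add: h_def card_wo)
qed



theorem lemma8p1:
  fixes a :: "real^'n::finite" and \<delta> R :: real and r :: "real \<Rightarrow> real"
  assumes "CARD('n) \<ge> 2" and "\<delta> > 0" and "R > 0"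
    and "a \<noteq> 0" and "\<forall>i. -2 \<le> a $ i \<and> a $ i \<le> 2"
    and "a \<bullet> (\<chi> i. 1) = 0"
    and "r \<in> borel_measurable borel" and "\<forall>t. \<bar>r t - t\<bar> \<le> \<delta>"
  shows "measure (unif_sphere R) {y. a \<bullet> round_vec r y = 0}
           \<le> 2 * \<delta> * (real CARD('n))^2 / (norm a * R)"
proof -
  note n2 = assms(1) and dpos = assms(2) and Rpos = assms(3) and a0 = assms(4)
    and abnd = assms(5) and rb = assms(8)
  define n where "n = real CARD('n)"
  have npos: "n \<ge> 2" using n2 by (simp add: n_def)
  have napos: "norm a > 0" using a0 by simp
  define E where "E = {y::real^'n. a \<bullet> round_vec r y = 0}"
  define f where "f x = R *\<^sub>R (x /\<^sub>R norm x)" for x :: "real^'n"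
  define B where "B = ball (0::real^'n) 1"
  define U where "U = uniform_measure lborel B"
  have rhs0: "0 \<le> 2 * \<delta> * n^2 / (norm a * R)"
    using dpos Rpos napos by simp
  have sets_us: "sets (unif_sphere R :: (real^'n) measure) = sets borel"
    by (simp add: unif_sphere_def)
  show ?thesis
  proof (cases "E \<in> sets borel")
    case False
    then have "measure (unif_sphere R) E = 0"
      by (intro measure_notin_sets) (simp add: sets_us)
    then show ?thesis using rhs0 by (simp add: E_def n_def)
  next
    case True
    have fmeas: "f \<in> borel_measurable borel" unfolding f_def by measurable
    have us: "unif_sphere R = distr U borel f"
      by (simp add: unif_sphere_def U_def B_def f_def[abs_def])
    have mU: "measurable U borel = measurable borel (borel :: (real^'n) measure)"
      by (rule measurable_cong_sets) (simp_all add: U_def)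
    have fU: "f \<in> measurable U borel" using fmeas by (simp only: mU)
    have V: "measure lborel B > 0" using content_ball_pos[of 1 "0::real^'n"] by (simp add: B_def)
    have Vfin: "emeasure lborel B < \<infinity>" unfolding B_def by (rule emeasure_lborel_ball_finite)
    have Veq: "emeasure lborel B = ennreal (measure lborel B)"
      using Vfin by (simp add: emeasure_eq_ennreal_measure)
    have Bsets: "B \<in> sets lborel" by (simp add: B_def)
    have Xsets: "f -` E \<in> sets lborel" using fmeas True by (simp add: measurable_sets_borel)
    have "measure (unif_sphere R) E = measure U (f -` E \<inter> space U)"
      using fU True by (simp add: us measure_distr)
    also have "\<dots> = measure U (f -` E)" by (simp add: U_def)
    also have "\<dots> = measure lborel (B \<inter> f -` E) / measure lborel B"
      unfolding U_def using V Veq Vfin Xsets by (intro measure_uniform_measure) auto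
    also have "\<dots> \<le> (2*n*\<delta>/R) / norm a * n * measure lborel B / measure lborel B"
    proof (rule divide_right_mono)
      define s where "s = 2*n*\<delta>/R"
      have spos: "s > 0" using npos dpos Rpos by (simp add: s_def)
      have sub: "B \<inter> f -` E \<subseteq> ball 0 1 \<inter> {x. \<bar>a \<bullet> x\<bar> \<le> s}"
      proof
        fix x assume x: "x \<in> B \<inter> f -` E"
        have nx: "norm x < 1" using x by (simp add: B_def)
        show "x \<in> ball 0 1 \<inter> {x. \<bar>a \<bullet> x\<bar> \<le> s}"
        proof (cases "x = 0")
          case True then show ?thesis using spos by simp
        next
          case False
          then have nxp: "norm x > 0" by simp
          define y where "y = f x"
          have ay0: "a \<bullet> round_vec r y = 0" using x by (simp add: E_def y_def)
          have "\<bar>a \<bullet> y\<bar> = \<bar>a \<bullet> (y - round_vec r y)\<bar>" using ay0 by (simp add: inner_diff_right)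
          also have "\<dots> = \<bar>\<Sum>i\<in>UNIV. a $ i * (y $ i - r (y $ i))\<bar>"
            by (simp add: inner_vec_def round_vec_def)
          also have "\<dots> \<le> (\<Sum>i\<in>UNIV. \<bar>a $ i * (y $ i - r (y $ i))\<bar>)" by (rule sum_abs)
          also have "\<dots> \<le> (\<Sum>i\<in>(UNIV::'n set). 2 * \<delta>)"
          proof (rule sum_mono)
            fix i
            have "\<bar>a $ i\<bar> \<le> 2" using abnd by (simp add: abs_le_iff) (metis minus_le_iff)
            moreover have "\<bar>y $ i - r (y $ i)\<bar> \<le> \<delta>" using rb[rule_format, of "y $ i"] by (simp add: abs_minus_commute)
            ultimately show "\<bar>a $ i * (y $ i - r (y $ i))\<bar> \<le> 2 * \<delta>"
              by (simp add: abs_mult mult_mono')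
          qed
          also have "\<dots> = 2 * n * \<delta>" by (simp add: n_def)
          finally have ay: "\<bar>a \<bullet> y\<bar> \<le> 2 * n * \<delta>" .
          have eq: "a \<bullet> y = R * (a \<bullet> x) / norm x" by (simp add: y_def f_def inner_scaleR_right divide_inverse)
          have "\<bar>a \<bullet> y\<bar> = R * \<bar>a \<bullet> x\<bar> / norm x"
            using Rpos nxp by (simp add: eq abs_mult abs_divide)
          then have "\<bar>a \<bullet> x\<bar> = \<bar>a \<bullet> y\<bar> * norm x / R" using nxp Rpos by (simp add: field_simps)
          also have "\<dots> \<le> 2 * n * \<delta> * 1 / R"
            using ay nx Rpos dpos npos by (intro divide_right_mono mult_mono) auto
          finally show ?thesis using nx by (simp add: s_def)
        qed
      qed
      have Tfm: "ball 0 1 \<inter> {x. \<bar>a \<bullet> x\<bar> \<le> s} \<in> fmeasurable lborel"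
      proof (rule fmeasurableI2[where A=B])
        show "B \<in> fmeasurable lborel" using Vfin Bsets by (simp add: fmeasurable_def)
        show "ball 0 1 \<inter> {x. \<bar>a \<bullet> x\<bar> \<le> s} \<subseteq> B" by (auto simp: B_def)
        show "ball 0 1 \<inter> {x. \<bar>a \<bullet> x\<bar> \<le> s} \<in> sets lborel" by measurable
      qed
      have "measure lborel (B \<inter> f -` E) \<le> measure lborel (ball 0 1 \<inter> {x. \<bar>a \<bullet> x\<bar> \<le> s})"
        using sub Tfm Bsets Xsets by (intro measure_mono_fmeasurable) auto
      also have "\<dots> \<le> s / norm a * n * measure lborel B"
        using slab_lborel[OF a0 spos n2] by (simp add: B_def n_def)
      finally show "measure lborel (B \<inter> f -` E) \<le> (2*n*\<delta>/R) / norm a * n * measure lborel B"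
        by (simp add: s_def)
    qed (use V in simp)
    also have "\<dots> = 2 * \<delta> * n^2 / (norm a * R)"
      using V napos Rpos by (simp add: field_simps power2_eq_square)
    finally show ?thesis by (simp add: E_def n_def)
  qed
qed


end
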